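(* Define $h:\mathbb N\to\mathbb N$ by $$h(n)=\begin{cases}\lfloor\varphi n\rfloor, & n\in R_{2,0}\cup R_{1,0},\\ \lfloor(\varphi-1) n+2\rfloor, & n\in R_{2,2},\\ \lfloor(\varphi-1) n-1\rfloor, & n\in R_{3,1}.\end{cases}$$ Then $h$ is an $R_{i,j}$-permutation of $\mathbb N$ of order $4$ (first values $2,3,4,1,8,5,11,12,7,16,\dots$). Moreover its powers are $R_{i,j}$-permutations given by $$h^2(n)=\begin{cases}\lfloor(\varphi+1) n-1\rfloor, & n\in R_{1,0},\\ n+2, & n\in R_{2,2},\\ n-2, & n\in R_{2,0},\\ \lfloor(2-\varphi) n+1\rfloor, & n\in R_{3,1},\end{cases}\qquad h^3(n)=h^{-1}(n)=\begin{cases}\lfloor\varphi n+3\rfloor, & n\in R_{2,2},\\ \lfloor\varphi n-2\rfloor, & n\in R_{1,0},\\ \lfloor(\varphi-1) n+1\rfloor, & n\in R_{3,1}\cup R_{2,0}.\end{cases}$$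
   Context: $\mathbb N=\{1,2,\dots\}$, $\varphi=\frac{1+\sqrt5}{2}$, $F$ the Fibonacci numbers ($F(0)=0,F(1)=F(2)=1$). For $i\in\mathbb Z^{\ge0},j\in\mathbb Z$, $R_{i,j}$ is the range of $n\mapsto F(i+1)\lfloor n\varphi\rfloor+F(i)n-j$, $n\in\mathbb N$. An $R_{i,j}$-permutation is a permutation $\pi$ of $\mathbb N$ defined piecewise on a finite partition of $\mathbb N$ into sets $R_{i,j}$, with $\pi(n)=\lfloor(a\varphi+b)n+c\rfloor$ on each piece for integers $a,b,c$ depending on the piece. Powers denote iterated composition. *)

theory Defs
  imports Complex_Main "HOL-Number_Theory.Fib"
begin

definition phi :: real where "phi = (1 + sqrt 5) / 2"

definition R :: "nat \<Rightarrow> int \<Rightarrow> int set" where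
  "R i j = {int (fib (i + 1)) * \<lfloor>real_of_int n * phi\<rfloor> + int (fib i) * n - j | n. n \<ge> 1}"

text \<open>A piece is (i, j, a, b, c): on R i j the map is n \<mapsto> floor((a phi + b) n + c).\<close>
definition piece_set :: "nat \<times> int \<times> int \<times> int \<times> int \<Rightarrow> int set" where
  "piece_set p = (case p of (i, j, a, b, c) \<Rightarrow> R i j)"

definition Rperm :: "(int \<Rightarrow> int) \<Rightarrow> bool" where
  "Rperm \<pi> \<longleftrightarrow> bij_betw \<pi> {1..} {1..} \<and>
     (\<exists>P :: (nat \<times> int \<times> int \<times> int \<times> int) set.
        finite P \<and>
        pairwise (\<lambda>p q. disjnt (piece_set p) (piece_set q)) P \<and>
        (\<Union>p\<in>P. piece_set p) = {1..} \<and>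
        (\<forall>(i, j, a, b, c) \<in> P. \<forall>n \<in> R i j.
           \<pi> n = \<lfloor>(of_int a * phi + of_int b) * of_int n + of_int c\<rfloor>))"

definition h :: "int \<Rightarrow> int" where
  "h n = (if n \<in> R 2 0 \<union> R 1 0 then \<lfloor>phi * of_int n\<rfloor>
          else if n \<in> R 2 2 then \<lfloor>(phi - 1) * of_int n + 2\<rfloor>
          else if n \<in> R 3 1 then \<lfloor>(phi - 1) * of_int n - 1\<rfloor>
          else n)"

end

theory Submission
  imports Defs "HOL-Computational_Algebra.Primes"
begin


lemma sqrt5_irrat: "sqrt 5 \<notin> \<rat>"
proof
  assume "sqrt 5 \<in> \<rat>"
  then obtain m n :: nat
    where n: "n \<noteq> 0" and sq: "\<bar>sqrt 5\<bar> = m / n" and cop: "coprime m n"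
    by (rule Rats_abs_nat_div_natE)
  have pr: "prime (5::nat)" by simp
  have "real m = sqrt 5 * n" using n sq by simp
  then have "real m ^ 2 = 5 * real n ^ 2" by (simp add: power_mult_distrib)
  then have "real (m^2) = real (5 * n^2)" by simp
  then have eq: "m^2 = 5 * n^2" by (simp only: of_nat_eq_iff)
  then have "5 dvd m^2" by simp
  then have "5 dvd m" using pr prime_dvd_power by blast
  then obtain k where k: "m = 5 * k" ..
  with eq have "n^2 = 5 * k^2" by (simp add: power2_eq_square)
  then have "5 dvd n^2" by simp
  then have "5 dvd n" using pr prime_dvd_power by blast
  with \<open>5 dvd m\<close> cop have "is_unit (5::nat)" by (intro coprime_common_divisor)
  then show False by simp
qed

lemma phi_irrat: assumes "n \<noteq> 0" shows "real_of_int n * phi \<noteq> of_int k"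
proof
  assume h: "real_of_int n * phi = of_int k"
  have "sqrt 5 = (2 * of_int k - of_int n) / of_int n"
    using h assms by (simp add: phi_def field_simps)
  also have "\<dots> \<in> \<rat>" by simp
  finally show False using sqrt5_irrat by simp
qed

lemma phi_sq: "phi * phi = phi + 1"
  unfolding phi_def by (simp add: field_simps)

lemma sqrt5_b: "2.236 < sqrt 5 \<and> sqrt 5 < 2.2362"
proof
  show "2.236 < sqrt 5" by (rule real_less_rsqrt) (simp add: power2_eq_square)
  have "sqrt 5 < sqrt (2.2362^2)" by (rule real_sqrt_less_mono) (simp add: power2_eq_square)
  then show "sqrt 5 < 2.2362" by simp
qed

lemma phi_b: "809/500 < phi" "phi < 16181/10000"
  using sqrt5_b unfolding phi_def by auto

definition A :: "int \<Rightarrow> int" where "A n = \<lfloor>real_of_int n * phi\<rfloor>"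

lemma theta: assumes "n \<ge> 1"
  obtains t where "real_of_int n * phi = of_int (A n) + t" "0 < t" "t < 1"
proof -
  define t where "t = real_of_int n * phi - of_int (A n)"
  have t1: "real_of_int n * phi = of_int (A n) + t" unfolding t_def by simp
  have "t \<noteq> 0"
  proof
    assume "t = 0"
    then have "real_of_int n * phi = of_int (A n)" using t1 by simp
    then show False using phi_irrat[of n "A n"] assms by simp
  qed
  moreover have "0 \<le> t" "t < 1" unfolding t_def A_def using floor_correct[of "real_of_int n * phi"] unfolding of_int_add of_int_1 by linarith+
  ultimately have "0 < t" "t < 1" by simp_all
  then show ?thesis by (rule that[OF t1])
qed

lemma thsetup: assumes "n \<ge> 1"
  obtains t where "of_int (A n) = of_int n * phi - t" "0 < t" "t < 1" "809/500 * t < t * phi" "t * phi < 16181/10000 * t"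
proof -
  obtain t where t: "real_of_int n * phi = of_int (A n) + t" "0 < t" "t < 1" using theta assms by blast
  have a: "t * (809/500) < t * phi" by (rule mult_strict_left_mono) (use phi_b t in simp_all)
  have b: "t * phi < t * (16181/10000)" by (rule mult_strict_left_mono) (use phi_b t in simp_all)
  have t1: "of_int (A n) = of_int n * phi - t" using t(1) by simp
  show ?thesis by (rule that[OF t1]) (use t a b in linarith)+
qed

lemma fl: fixes r :: real assumes "K + c = RR" "of_int c \<le> r" "r < of_int c + 1" shows "\<lfloor>of_int K + r\<rfloor> = RR"
proof -
  have "of_int RR = of_int K + (of_int c :: real)" using assms(1) by simp
  then show ?thesis unfolding floor_eq_iff using assms(2,3) by linarith
qed

lemma fl0: "(K::int) = RR \<Longrightarrow> 0 \<le> (r::real) \<Longrightarrow> r < 1 \<Longrightarrow> \<lfloor>of_int K + r\<rfloor> = RR"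
  using fl[of K 0 RR r] by simp
lemma flm1: "(K::int) - 1 = RR \<Longrightarrow> -1 \<le> (r::real) \<Longrightarrow> r < 0 \<Longrightarrow> \<lfloor>of_int K + r\<rfloor> = RR"
  using fl[of K "-1" RR r] by simp
lemma flm2: "(K::int) - 2 = RR \<Longrightarrow> -2 \<le> (r::real) \<Longrightarrow> r < -1 \<Longrightarrow> \<lfloor>of_int K + r\<rfloor> = RR"
  using fl[of K "-2" RR r] by simp

lemmas castsimps = of_int_add of_int_mult of_int_diff of_int_numeral of_int_1



lemma F1: assumes "n \<ge> 1" shows "\<lfloor>phi * of_int (A n + n)\<rfloor> = 2 * A n + n"
proof -
  obtain t where t: "of_int (A n) = of_int n * phi - t" "0 < t" "t < 1" "809/500 * t < t * phi" "t * phi < 16181/10000 * t"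
    using thsetup assms by blast
  have e: "phi * of_int (A n + n) = of_int (2 * A n + n) + (2*t - t*phi)"
  proof -
    have "phi * of_int (A n + n) - (of_int (2 * A n + n) + (2*t - t*phi)) = (1) * of_int n * (phi*phi - phi - 1)"
      unfolding castsimps t(1) by (simp add: algebra_simps)
    then show ?thesis using phi_sq by simp
  qed
  show ?thesis unfolding e by (rule fl0) (use t phi_b in linarith)+
qed

lemma F2: assumes "n \<ge> 1" shows "\<lfloor>phi * of_int (2 * A n + n)\<rfloor> = 3 * A n + 2 * n - 1"
proof -
  obtain t where t: "of_int (A n) = of_int n * phi - t" "0 < t" "t < 1" "809/500 * t < t * phi" "t * phi < 16181/10000 * t"
    using thsetup assms by blast
  have e: "phi * of_int (2 * A n + n) = of_int (3 * A n + 2 * n) + (3*t - 2*(t*phi))"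
  proof -
    have "phi * of_int (2 * A n + n) - (of_int (3 * A n + 2 * n) + (3*t - 2*(t*phi))) = (2) * of_int n * (phi*phi - phi - 1)"
      unfolding castsimps t(1) by (simp add: algebra_simps)
    then show ?thesis using phi_sq by simp
  qed
  show ?thesis unfolding e by (rule flm1) (use t phi_b in linarith)+
qed

lemma F3: assumes "n \<ge> 1" shows "\<lfloor>(phi - 1) * of_int (3 * A n + 2 * n - 1) - 1\<rfloor> = 2 * A n + n - 2"
proof -
  obtain t where t: "of_int (A n) = of_int n * phi - t" "0 < t" "t < 1" "809/500 * t < t * phi" "t * phi < 16181/10000 * t"
    using thsetup assms by blast
  have e: "(phi - 1) * of_int (3 * A n + 2 * n - 1) - 1 = of_int (2 * A n + n) + (5*t - 3*(t*phi) - phi)"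
  proof -
    have "(phi - 1) * of_int (3 * A n + 2 * n - 1) - 1 - (of_int (2 * A n + n) + (5*t - 3*(t*phi) - phi)) = (3) * of_int n * (phi*phi - phi - 1)"
      unfolding castsimps t(1) by (simp add: algebra_simps)
    then show ?thesis using phi_sq by simp
  qed
  show ?thesis unfolding e by (rule flm2) (use t phi_b in linarith)+
qed

lemma F4: assumes "n \<ge> 1" shows "\<lfloor>(phi - 1) * of_int (2 * A n + n - 2) + 2\<rfloor> = A n + n"
proof -
  obtain t where t: "of_int (A n) = of_int n * phi - t" "0 < t" "t < 1" "809/500 * t < t * phi" "t * phi < 16181/10000 * t"
    using thsetup assms by blast
  have e: "(phi - 1) * of_int (2 * A n + n - 2) + 2 = of_int (A n + n) + (3*t - 2*(t*phi) + 4 - 2*phi)"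
  proof -
    have "(phi - 1) * of_int (2 * A n + n - 2) + 2 - (of_int (A n + n) + (3*t - 2*(t*phi) + 4 - 2*phi)) = (2) * of_int n * (phi*phi - phi - 1)"
      unfolding castsimps t(1) by (simp add: algebra_simps)
    then show ?thesis using phi_sq by simp
  qed
  show ?thesis unfolding e by (rule fl0) (use t phi_b in linarith)+
qed

lemma F5: assumes "n \<ge> 1" shows "\<lfloor>phi * of_int (A n)\<rfloor> = A n + n - 1"
proof -
  obtain t where t: "of_int (A n) = of_int n * phi - t" "0 < t" "t < 1" "809/500 * t < t * phi" "t * phi < 16181/10000 * t"
    using thsetup assms by blast
  have e: "phi * of_int (A n) = of_int (A n + n) + (t - t*phi)"
  proof -
    have "phi * of_int (A n) - (of_int (A n + n) + (t - t*phi)) = (1) * of_int n * (phi*phi - phi - 1)"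
      unfolding castsimps t(1) by (simp add: algebra_simps)
    then show ?thesis using phi_sq by simp
  qed
  show ?thesis unfolding e by (rule flm1) (use t phi_b in linarith)+
qed

lemma G1: assumes "n \<ge> 1" shows "\<lfloor>(phi + 1) * of_int (A n + n) - 1\<rfloor> = 3 * A n + 2 * n - 1"
proof -
  obtain t where t: "of_int (A n) = of_int n * phi - t" "0 < t" "t < 1" "809/500 * t < t * phi" "t * phi < 16181/10000 * t"
    using thsetup assms by blast
  have e: "(phi + 1) * of_int (A n + n) - 1 = of_int (3 * A n + 2 * n) + (2*t - t*phi - 1)"
  proof -
    have "(phi + 1) * of_int (A n + n) - 1 - (of_int (3 * A n + 2 * n) + (2*t - t*phi - 1)) = (1) * of_int n * (phi*phi - phi - 1)"
      unfolding castsimps t(1) by (simp add: algebra_simps)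
    then show ?thesis using phi_sq by simp
  qed
  show ?thesis unfolding e by (rule flm1) (use t phi_b in linarith)+
qed

lemma G2: assumes "n \<ge> 1" shows "\<lfloor>(2 - phi) * of_int (3 * A n + 2 * n - 1) + 1\<rfloor> = A n + n"
proof -
  obtain t where t: "of_int (A n) = of_int n * phi - t" "0 < t" "t < 1" "809/500 * t < t * phi" "t * phi < 16181/10000 * t"
    using thsetup assms by blast
  have e: "(2 - phi) * of_int (3 * A n + 2 * n - 1) + 1 = of_int (A n + n) + (phi - 1 - 5*t + 3*(t*phi))"
  proof -
    have "(2 - phi) * of_int (3 * A n + 2 * n - 1) + 1 - (of_int (A n + n) + (phi - 1 - 5*t + 3*(t*phi))) = (-3) * of_int n * (phi*phi - phi - 1)"
      unfolding castsimps t(1) by (simp add: algebra_simps)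
    then show ?thesis using phi_sq by simp
  qed
  show ?thesis unfolding e by (rule fl0) (use t phi_b in linarith)+
qed

lemma H1: assumes "n \<ge> 1" shows "\<lfloor>phi * of_int (2 * A n + n - 2) + 3\<rfloor> = 3 * A n + 2 * n - 1"
proof -
  obtain t where t: "of_int (A n) = of_int n * phi - t" "0 < t" "t < 1" "809/500 * t < t * phi" "t * phi < 16181/10000 * t"
    using thsetup assms by blast
  have e: "phi * of_int (2 * A n + n - 2) + 3 = of_int (3 * A n + 2 * n) + (3*t - 2*(t*phi) + 3 - 2*phi)"
  proof -
    have "phi * of_int (2 * A n + n - 2) + 3 - (of_int (3 * A n + 2 * n) + (3*t - 2*(t*phi) + 3 - 2*phi)) = (2) * of_int n * (phi*phi - phi - 1)"
      unfolding castsimps t(1) by (simp add: algebra_simps)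
    then show ?thesis using phi_sq by simp
  qed
  show ?thesis unfolding e by (rule flm1) (use t phi_b in linarith)+
qed

lemma H2: assumes "n \<ge> 1" shows "\<lfloor>phi * of_int (A n + n) - 2\<rfloor> = 2 * A n + n - 2"
proof -
  obtain t where t: "of_int (A n) = of_int n * phi - t" "0 < t" "t < 1" "809/500 * t < t * phi" "t * phi < 16181/10000 * t"
    using thsetup assms by blast
  have e: "phi * of_int (A n + n) - 2 = of_int (2 * A n + n) + (2*t - t*phi - 2)"
  proof -
    have "phi * of_int (A n + n) - 2 - (of_int (2 * A n + n) + (2*t - t*phi - 2)) = (1) * of_int n * (phi*phi - phi - 1)"
      unfolding castsimps t(1) by (simp add: algebra_simps)
    then show ?thesis using phi_sq by simp
  qed
  show ?thesis unfolding e by (rule flm2) (use t phi_b in linarith)+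
qed

lemma H3: assumes "n \<ge> 1" shows "\<lfloor>(phi - 1) * of_int (3 * A n + 2 * n - 1) + 1\<rfloor> = 2 * A n + n"
proof -
  obtain t where t: "of_int (A n) = of_int n * phi - t" "0 < t" "t < 1" "809/500 * t < t * phi" "t * phi < 16181/10000 * t"
    using thsetup assms by blast
  have e: "(phi - 1) * of_int (3 * A n + 2 * n - 1) + 1 = of_int (2 * A n + n) + (5*t - 3*(t*phi) - phi + 2)"
  proof -
    have "(phi - 1) * of_int (3 * A n + 2 * n - 1) + 1 - (of_int (2 * A n + n) + (5*t - 3*(t*phi) - phi + 2)) = (3) * of_int n * (phi*phi - phi - 1)"
      unfolding castsimps t(1) by (simp add: algebra_simps)
    then show ?thesis using phi_sq by simp
  qed
  show ?thesis unfolding e by (rule fl0) (use t phi_b in linarith)+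
qed

lemma H4: assumes "n \<ge> 1" shows "\<lfloor>(phi - 1) * of_int (2 * A n + n) + 1\<rfloor> = A n + n"
proof -
  obtain t where t: "of_int (A n) = of_int n * phi - t" "0 < t" "t < 1" "809/500 * t < t * phi" "t * phi < 16181/10000 * t"
    using thsetup assms by blast
  have e: "(phi - 1) * of_int (2 * A n + n) + 1 = of_int (A n + n) + (3*t - 2*(t*phi) + 1)"
  proof -
    have "(phi - 1) * of_int (2 * A n + n) + 1 - (of_int (A n + n) + (3*t - 2*(t*phi) + 1)) = (2) * of_int n * (phi*phi - phi - 1)"
      unfolding castsimps t(1) by (simp add: algebra_simps)
    then show ?thesis using phi_sq by simp
  qed
  show ?thesis unfolding e by (rule fl0) (use t phi_b in linarith)+
qed



lemma fib_vals: "fib 2 = 1" "fib 3 = 2" "fib 4 = 3" by (simp_all add: numeral_eq_Suc)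

lemma R10: "x \<in> R 1 0 \<longleftrightarrow> (\<exists>n\<ge>1. x = A n + n)"
  unfolding R_def A_def by (auto simp: fib_vals)
lemma R20: "x \<in> R 2 0 \<longleftrightarrow> (\<exists>n\<ge>1. x = 2 * A n + n)"
  unfolding R_def A_def by (auto simp: fib_vals)
lemma R22: "x \<in> R 2 2 \<longleftrightarrow> (\<exists>n\<ge>1. x = 2 * A n + n - 2)"
  unfolding R_def A_def by (auto simp: fib_vals)
lemma R31: "x \<in> R 3 1 \<longleftrightarrow> (\<exists>n\<ge>1. x = 3 * A n + 2 * n - 1)"
  unfolding R_def A_def by (auto simp: fib_vals)

lemma A_mono: assumes "n < k" shows "A n < A k"
proof -
  have "of_int n + 1 \<le> real_of_int k" using assms by linarith
  then have "(of_int n + 1) * phi \<le> real_of_int k * phi" by (rule mult_right_mono) (use phi_b in linarith)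
  then have "real_of_int n * phi + 1 \<le> real_of_int k * phi" using phi_b by (simp add: algebra_simps)
  then have "\<lfloor>real_of_int n * phi + 1\<rfloor> \<le> \<lfloor>real_of_int k * phi\<rfloor>" by (rule floor_mono)
  then show ?thesis unfolding A_def by simp
qed

lemma A_inj: "A n = A k \<Longrightarrow> n = k"
  by (metis A_mono less_irrefl linorder_neqE)

lemma A1: "A 1 = 1" unfolding A_def using phi_b by (simp add: floor_eq_iff)
lemma A2: "A 2 = 3" unfolding A_def using phi_b by (simp add: floor_eq_iff)
lemma A3: "A 3 = 4" unfolding A_def using phi_b by (simp add: floor_eq_iff)
lemma A4: "A 4 = 6" unfolding A_def using phi_b by (simp add: floor_eq_iff)

lemma A_pos: assumes "n \<ge> 1" shows "A n \<ge> 1"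
proof (cases "n = 1")
  case True then show ?thesis using A1 by simp
next
  case False then have "A 1 < A n" using assms by (intro A_mono) simp
  then show ?thesis using A1 by simp
qed

lemma int_between: fixes z :: int assumes "(0::real) < of_int z" "(of_int z::real) < 1" shows False
proof -
  have "0 < z" using assms(1) by simp
  moreover have "z < 1" using assms(2) by simp
  ultimately show False by simp
qed

lemma beatty_disj: assumes "n \<ge> 1" "k \<ge> 1" shows "A n \<noteq> A k + k"
proof
  assume eq: "A n = A k + k"
  obtain t where t: "of_int (A n) = of_int n * phi - t" "0 < t" "t < 1" "809/500 * t < t * phi" "t * phi < 16181/10000 * t"
    using thsetup assms(1) by blast
  obtain s where s: "of_int (A k) = of_int k * phi - s" "0 < s" "s < 1" "809/500 * s < s * phi" "s * phi < 16181/10000 * s"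
    using thsetup assms(2) by blast
  have h1: "of_int n = (of_int (A n) + t) * (phi - 1)"
  proof -
    have "(of_int (A n) + t) * (phi - 1) - of_int n = of_int n * (phi * phi - phi - 1)"
      unfolding t(1) by (simp add: algebra_simps)
    then show ?thesis using phi_sq by simp
  qed
  have h2: "of_int k = (of_int (A k) + of_int k + s) * (2 - phi)"
  proof -
    have "(of_int (A k) + of_int k + s) * (2 - phi) - of_int k = - of_int k * (phi * phi - phi - 1)"
      unfolding s(1) by (simp add: algebra_simps)
    then show ?thesis using phi_sq by simp
  qed
  have h3: "real_of_int (A n) = of_int (A k) + of_int k" using eq by simp
  have "real_of_int n + of_int k = (of_int (A n) + t) * (phi - 1) + (of_int (A n) + s) * (2 - phi)"
    using h1 h2 h3 by simp
  also have "\<dots> = of_int (A n) + (t*phi - t + 2*s - s*phi)" by (simp add: algebra_simps)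
  finally have e: "real_of_int (n + k - A n) = t*phi - t + 2*s - s*phi" by simp
  have p1: "0 < (1 - t) * (phi - 1)" using t phi_b by (intro mult_pos_pos) simp_all
  have p2: "0 < (1 - s) * (2 - phi)" using s phi_b by (intro mult_pos_pos) simp_all
  have p1': "0 < phi - 1 - t * phi + t" using p1 by (simp add: algebra_simps)
  have p2': "0 < 2 - phi - 2 * s + s * phi" using p2 by (simp add: algebra_simps)
  have "0 < real_of_int (n + k - A n)" unfolding e using t s by linarith
  moreover have "real_of_int (n + k - A n) < 1" unfolding e using p1' p2' by linarith
  ultimately show False by (rule int_between)
qed

lemma beatty_cover: assumes "m \<ge> 1" shows "(\<exists>n\<ge>1. m = A n) \<or> (\<exists>n\<ge>1. m = A n + n)"
proof -
  define x where "x = of_int m * (phi - 1)"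
  define x' where "x' = (of_int m + 1) * (phi - 1)"
  define p where "p = \<lfloor>x\<rfloor>"
  define p' where "p' = \<lfloor>x'\<rfloor>"
  have fx: "of_int p \<le> x" "x < of_int p + 1" unfolding p_def using floor_correct[of x] by auto
  have fx': "of_int p' \<le> x'" "x' < of_int p' + 1" unfolding p'_def using floor_correct[of x'] by auto
  have xphi: "x * phi = of_int m"
  proof -
    have "x * phi - of_int m = of_int m * (phi * phi - phi - 1)" unfolding x_def by (simp add: algebra_simps)
    then show ?thesis using phi_sq by simp
  qed
  have xphi': "x' * phi = of_int m + 1"
  proof -
    have "x' * phi - (of_int m + 1) = (of_int m + 1) * (phi * phi - phi - 1)" unfolding x'_def by (simp add: algebra_simps)
    then show ?thesis using phi_sq by simp
  qed
  have xpos: "x > 0" unfolding x_def using assms phi_b by (intro mult_pos_pos) simp_all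
  show ?thesis
  proof (cases "p' \<ge> p + 1")
    case True
    define n where "n = p + 1"
    have n1: "x < of_int n" unfolding n_def using fx by simp
    have "real_of_int (p + 1) \<le> of_int p'" using True by (simp only: of_int_le_iff)
    then have "of_int n \<le> x'" unfolding n_def using fx' by linarith
    moreover have "of_int n \<noteq> x'"
    proof
      assume "of_int n = x'"
      then have "real_of_int (m + 1) * phi = of_int (n + m + 1)" unfolding x'_def by (simp add: algebra_simps)
      then show False using phi_irrat[of "m+1" "n + m + 1"] assms by simp
    qed
    ultimately have n2: "of_int n < x'" by simp
    have "x * phi < of_int n * phi" using n1 phi_b by (intro mult_strict_right_mono) simp_all
    moreover have "of_int n * phi < x' * phi" using n2 phi_b by (intro mult_strict_right_mono) simp_all
    ultimately have "A n = m" unfolding A_def floor_eq_iff using xphi xphi' by simp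
    moreover have "n \<ge> 1" using n1 xpos by simp
    ultimately show ?thesis by auto
  next
    case False
    define n where "n = m - p"
    have "x \<noteq> of_int p"
    proof
      assume "x = of_int p"
      then have "real_of_int m * phi = of_int (p + m)" unfolding x_def by (simp add: algebra_simps)
      then show False using phi_irrat[of m "p + m"] assms by simp
    qed
    then have xp: "of_int p < x" using fx by simp
    have y1: "of_int m - x < of_int n" unfolding n_def using xp by simp
    have "real_of_int p' \<le> of_int p" using False by simp
    then have y2: "of_int n < of_int m + 1 - x'" using fx' unfolding n_def of_int_diff by linarith
    have yphi: "(of_int m - x) * (phi + 1) = of_int m"
    proof -
      have "(of_int m - x) * (phi + 1) - of_int m = - of_int m * (phi * phi - phi - 1)" unfolding x_def by (simp add: algebra_simps)
      then show ?thesis using phi_sq by simp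
    qed
    have yphi': "(of_int m + 1 - x') * (phi + 1) = of_int m + 1"
    proof -
      have "(of_int m + 1 - x') * (phi + 1) - (of_int m + 1) = - (of_int m + 1) * (phi * phi - phi - 1)" unfolding x'_def by (simp add: algebra_simps)
      then show ?thesis using phi_sq by simp
    qed
    have "(of_int m - x) * (phi + 1) < of_int n * (phi + 1)" using y1 phi_b by (intro mult_strict_right_mono) simp_all
    moreover have "of_int n * (phi + 1) < (of_int m + 1 - x') * (phi + 1)" using y2 phi_b by (intro mult_strict_right_mono) simp_all
    ultimately have b1: "of_int m < of_int n * phi + of_int n" "of_int n * phi + of_int n < of_int m + 1"
      using yphi yphi' by (simp_all add: algebra_simps)
    have An: "A n = m - n" unfolding A_def floor_eq_iff using b1 by simp
    have "of_int m * (2 - phi) > 0" using assms phi_b by (intro mult_pos_pos) simp_all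
    moreover have "of_int m - x = of_int m * (2 - phi)" unfolding x_def by (simp add: algebra_simps)
    ultimately have "of_int m - x > 0" by simp
    then have "n \<ge> 1" using y1 by simp
    then show ?thesis using An by auto
  qed
qed



lemma AA: "n \<ge> 1 \<Longrightarrow> A (A n) = A n + n - 1"
  using F5[of n] unfolding A_def[of "A n"] by (simp add: mult.commute)
lemma AB: "n \<ge> 1 \<Longrightarrow> A (A n + n) = 2 * A n + n"
  using F1[of n] unfolding A_def[of "A n + n"] by (simp add: mult.commute)

lemma cover: assumes "m \<ge> 1" shows "m \<in> R 1 0 \<or> m \<in> R 2 0 \<or> m \<in> R 2 2 \<or> m \<in> R 3 1"
proof -
  from beatty_cover[OF assms] show ?thesis
  proof
    assume "\<exists>n\<ge>1. m = A n + n" then show ?thesis unfolding R10 by blast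
  next
    assume "\<exists>k\<ge>1. m = A k"
    then obtain k where k: "k \<ge> 1" "m = A k" by blast
    from beatty_cover[OF k(1)] show ?thesis
    proof
      assume "\<exists>n\<ge>1. k = A n + n"
      then obtain n where "n \<ge> 1" "k = A n + n" by blast
      then have "m = 2 * A n + n" using k AB by simp
      then show ?thesis unfolding R20 using \<open>n \<ge> 1\<close> by blast
    next
      assume "\<exists>j\<ge>1. k = A j"
      then obtain j where j: "j \<ge> 1" "k = A j" by blast
      then have mj: "m = A j + j - 1" using k AA by simp
      from beatty_cover[OF j(1)] show ?thesis
      proof
        assume "\<exists>n\<ge>1. j = A n + n"
        then obtain n where "n \<ge> 1" "j = A n + n" by blast
        then have "m = 3 * A n + 2 * n - 1" using mj AB by simp
        then show ?thesis unfolding R31 using \<open>n \<ge> 1\<close> by blast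
      next
        assume "\<exists>n\<ge>1. j = A n"
        then obtain n where "n \<ge> 1" "j = A n" by blast
        then have "m = 2 * A n + n - 2" using mj AA by simp
        then show ?thesis unfolding R22 using \<open>n \<ge> 1\<close> by blast
      qed
    qed
  qed
qed

lemma AAA: "n \<ge> 1 \<Longrightarrow> A (A (A n)) = 2 * A n + n - 2"
  using AA[of "A n"] AA[of n] A_pos[of n] by simp
lemma AAB: "n \<ge> 1 \<Longrightarrow> A (A (A n + n)) = 3 * A n + 2 * n - 1"
proof -
  assume n: "n \<ge> 1"
  have "A n + n \<ge> 1" using A_pos[OF n] n by simp
  then show ?thesis using AA[of "A n + n"] AB[OF n] by simp
qed

lemma d12: "x \<in> R 1 0 \<Longrightarrow> x \<in> R 2 0 \<Longrightarrow> False"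
proof -
  assume "x \<in> R 1 0" "x \<in> R 2 0"
  then obtain k n where kn: "k \<ge> 1" "x = A k + k" "n \<ge> 1" "x = 2 * A n + n" unfolding R10 R20 by blast
  have "A n + n \<ge> 1" using A_pos[OF kn(3)] kn(3) by simp
  then show False using beatty_disj[of "A n + n" k] kn AB[OF kn(3)] by simp
qed

lemma d13: "x \<in> R 1 0 \<Longrightarrow> x \<in> R 2 2 \<Longrightarrow> False"
proof -
  assume "x \<in> R 1 0" "x \<in> R 2 2"
  then obtain k n where kn: "k \<ge> 1" "x = A k + k" "n \<ge> 1" "x = 2 * A n + n - 2" unfolding R10 R22 by blast
  have "A (A n) \<ge> 1" using A_pos A_pos[OF kn(3)] by simp
  then show False using beatty_disj[of "A (A n)" k] kn AAA[OF kn(3)] by simp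
qed

lemma d14: "x \<in> R 1 0 \<Longrightarrow> x \<in> R 3 1 \<Longrightarrow> False"
proof -
  assume "x \<in> R 1 0" "x \<in> R 3 1"
  then obtain k n where kn: "k \<ge> 1" "x = A k + k" "n \<ge> 1" "x = 3 * A n + 2 * n - 1" unfolding R10 R31 by blast
  have "A n + n \<ge> 1" using A_pos[OF kn(3)] kn(3) by simp
  then have "A (A n + n) \<ge> 1" using A_pos by simp
  then show False using beatty_disj[of "A (A n + n)" k] kn AAB[OF kn(3)] by simp
qed

lemma d23: "x \<in> R 2 0 \<Longrightarrow> x \<in> R 2 2 \<Longrightarrow> False"
proof -
  assume "x \<in> R 2 0" "x \<in> R 2 2"
  then obtain k n where kn: "k \<ge> 1" "x = 2 * A k + k" "n \<ge> 1" "x = 2 * A n + n - 2" unfolding R20 R22 by blast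
  have "A (A k + k) = A (A (A n))" using kn AB[OF kn(1)] AAA[OF kn(3)] by simp
  then have "A k + k = A (A n)" by (rule A_inj)
  moreover have "A n \<ge> 1" using A_pos[OF kn(3)] .
  ultimately show False using beatty_disj[of "A n" k] kn(1) by simp
qed

lemma d24: "x \<in> R 2 0 \<Longrightarrow> x \<in> R 3 1 \<Longrightarrow> False"
proof -
  assume "x \<in> R 2 0" "x \<in> R 3 1"
  then obtain k n where kn: "k \<ge> 1" "x = 2 * A k + k" "n \<ge> 1" "x = 3 * A n + 2 * n - 1" unfolding R20 R31 by blast
  have "A (A k + k) = A (A (A n + n))" using kn AB[OF kn(1)] AAB[OF kn(3)] by simp
  then have "A k + k = A (A n + n)" by (rule A_inj)
  moreover have "A n + n \<ge> 1" using A_pos[OF kn(3)] kn(3) by simp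
  ultimately show False using beatty_disj[of "A n + n" k] kn(1) by simp
qed

lemma d34: "x \<in> R 2 2 \<Longrightarrow> x \<in> R 3 1 \<Longrightarrow> False"
proof -
  assume "x \<in> R 2 2" "x \<in> R 3 1"
  then obtain k n where kn: "k \<ge> 1" "x = 2 * A k + k - 2" "n \<ge> 1" "x = 3 * A n + 2 * n - 1" unfolding R22 R31 by blast
  have "A (A (A k)) = A (A (A n + n))" using kn AAA[OF kn(1)] AAB[OF kn(3)] by simp
  then have "A (A k) = A (A n + n)" by (rule A_inj)
  then have "A k = A n + n" by (rule A_inj)
  then show False using beatty_disj[of k n] kn(1,3) by simp
qed

lemma pos: "x \<in> R 1 0 \<or> x \<in> R 2 0 \<or> x \<in> R 2 2 \<or> x \<in> R 3 1 \<Longrightarrow> x \<ge> 1"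
  unfolding R10 R20 R22 R31 using A_pos by force

lemma hR10: "x \<in> R 1 0 \<Longrightarrow> h x = \<lfloor>phi * of_int x\<rfloor>" unfolding h_def by simp
lemma hR20: "x \<in> R 2 0 \<Longrightarrow> h x = \<lfloor>phi * of_int x\<rfloor>" unfolding h_def by simp
lemma hR22: "x \<in> R 2 2 \<Longrightarrow> h x = \<lfloor>(phi - 1) * of_int x + 2\<rfloor>"
  unfolding h_def using d12 d13 d23 by auto
lemma hR31: "x \<in> R 3 1 \<Longrightarrow> h x = \<lfloor>(phi - 1) * of_int x - 1\<rfloor>"
  unfolding h_def using d14 d24 d34 by auto

lemma m10: "n \<ge> 1 \<Longrightarrow> A n + n \<in> R 1 0" unfolding R10 by blast
lemma m20: "n \<ge> 1 \<Longrightarrow> 2 * A n + n \<in> R 2 0" unfolding R20 by blast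
lemma m22: "n \<ge> 1 \<Longrightarrow> 2 * A n + n - 2 \<in> R 2 2" unfolding R22 by blast
lemma m31: "n \<ge> 1 \<Longrightarrow> 3 * A n + 2 * n - 1 \<in> R 3 1" unfolding R31 by blast

lemma c1: "n \<ge> 1 \<Longrightarrow> h (A n + n) = 2 * A n + n" using hR10[OF m10] F1 by simp
lemma c2: "n \<ge> 1 \<Longrightarrow> h (2 * A n + n) = 3 * A n + 2 * n - 1" using hR20[OF m20] F2 by simp
lemma c3: "n \<ge> 1 \<Longrightarrow> h (3 * A n + 2 * n - 1) = 2 * A n + n - 2" using hR31[OF m31] F3 by simp
lemma c4: "n \<ge> 1 \<Longrightarrow> h (2 * A n + n - 2) = A n + n" using hR22[OF m22] F4 by simp

lemma pow2: "(h ^^ 2) x = h (h x)" by (simp add: numeral_eq_Suc)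
lemma pow3: "(h ^^ 3) x = h (h (h x))" by (simp add: numeral_eq_Suc)
lemma pow4: "(h ^^ 4) x = h (h (h (h x)))" by (simp add: numeral_eq_Suc)

lemma cases4:
  assumes "x \<ge> 1"
  obtains n where "n \<ge> 1" "x = A n + n" | n where "n \<ge> 1" "x = 2 * A n + n"
    | n where "n \<ge> 1" "x = 2 * A n + n - 2" | n where "n \<ge> 1" "x = 3 * A n + 2 * n - 1"
  using cover[OF assms] unfolding R10 R20 R22 R31 by blast

lemma h_pos: "x \<ge> 1 \<Longrightarrow> h x \<ge> 1"
  by (erule cases4) (use c1 c2 c3 c4 m10 m20 m22 m31 pos in force)+

lemma h4: "x \<ge> 1 \<Longrightarrow> h (h (h (h x))) = x"
  by (erule cases4) (simp_all add: c1 c2 c3 c4)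

lemma Rperm4:
  assumes bij: "bij_betw f {1..} {1..}"
  and e1: "\<forall>x\<in>R 1 0. f x = \<lfloor>(of_int a1 * phi + of_int b1) * of_int x + of_int c1\<rfloor>"
  and e2: "\<forall>x\<in>R 2 0. f x = \<lfloor>(of_int a2 * phi + of_int b2) * of_int x + of_int c2\<rfloor>"
  and e3: "\<forall>x\<in>R 2 2. f x = \<lfloor>(of_int a3 * phi + of_int b3) * of_int x + of_int c3\<rfloor>"
  and e4: "\<forall>x\<in>R 3 1. f x = \<lfloor>(of_int a4 * phi + of_int b4) * of_int x + of_int c4\<rfloor>"
  shows "Rperm f"
proof -
  define P :: "(nat \<times> int \<times> int \<times> int \<times> int) set" where
    "P = {(1,0,a1,b1,c1), (2,0,a2,b2,c2), (2,2,a3,b3,c3), (3,1,a4,b4,c4)}"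
  have fin: "finite P" unfolding P_def by simp
  have dj: "R 1 0 \<inter> R 2 0 = {}" "R 1 0 \<inter> R 2 2 = {}" "R 1 0 \<inter> R 3 1 = {}"
    "R 2 0 \<inter> R 2 2 = {}" "R 2 0 \<inter> R 3 1 = {}" "R 2 2 \<inter> R 3 1 = {}"
    using d12 d13 d14 d23 d24 d34 by blast+
  have pw: "pairwise (\<lambda>p q. disjnt (piece_set p) (piece_set q)) P"
    unfolding P_def pairwise_def piece_set_def disjnt_def using dj by (auto simp: Int_commute)
  have un: "(\<Union>p\<in>P. piece_set p) = {1..}"
  proof
    show "(\<Union>p\<in>P. piece_set p) \<subseteq> {1..}" unfolding P_def piece_set_def using pos by auto
    show "{1..} \<subseteq> (\<Union>p\<in>P. piece_set p)" unfolding P_def piece_set_def using cover by auto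
  qed
  have fm: "\<forall>(i, j, a, b, c) \<in> P. \<forall>n \<in> R i j. f n = \<lfloor>(of_int a * phi + of_int b) * of_int n + of_int c\<rfloor>"
    unfolding P_def using e1 e2 e3 e4 by auto
  show ?thesis unfolding Rperm_def using bij fin pw un fm by blast
qed

lemma conv:
  assumes "\<forall>x\<in>S. f x = \<lfloor>E x\<rfloor>" "\<And>x. E x = (of_int a * phi + of_int b) * of_int x + of_int c"
  shows "\<forall>x\<in>S. f x = \<lfloor>(of_int a * phi + of_int b) * of_int x + of_int c\<rfloor>"
  using assms by simp

lemma bij_h: "bij_betw h {1..} {1..}"
proof (rule bij_betw_byWitness[where f'="h ^^ 3"])
  show "\<forall>a\<in>{1..}. (h ^^ 3) (h a) = a" using h4 by (simp add: pow3)
  show "\<forall>a\<in>{1..}. h ((h ^^ 3) a) = a" using h4 by (simp add: pow3)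
  show "h ` {1..} \<subseteq> {1..}" using h_pos by auto
  show "(h ^^ 3) ` {1..} \<subseteq> {1..}" using h_pos by (auto simp: pow3)
qed

lemma bij_h2: "bij_betw (h ^^ 2) {1..} {1..}"
proof (rule bij_betw_byWitness[where f'="h ^^ 2"])
  show "\<forall>a\<in>{1..}. (h ^^ 2) ((h ^^ 2) a) = a" using h4 by (simp add: pow2)
  show "\<forall>a\<in>{1..}. (h ^^ 2) ((h ^^ 2) a) = a" using h4 by (simp add: pow2)
  show "(h ^^ 2) ` {1..} \<subseteq> {1..}" using h_pos by (auto simp: pow2)
  show "(h ^^ 2) ` {1..} \<subseteq> {1..}" using h_pos by (auto simp: pow2)
qed

lemma bij_h3: "bij_betw (h ^^ 3) {1..} {1..}"
proof (rule bij_betw_byWitness[where f'="h"])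
  show "\<forall>a\<in>{1..}. h ((h ^^ 3) a) = a" using h4 by (simp add: pow3)
  show "\<forall>a\<in>{1..}. (h ^^ 3) (h a) = a" using h4 by (simp add: pow3)
  show "(h ^^ 3) ` {1..} \<subseteq> {1..}" using h_pos by (auto simp: pow3)
  show "h ` {1..} \<subseteq> {1..}" using h_pos by auto
qed

lemma s2_10: "\<forall>x \<in> R 1 0. (h ^^ 2) x = \<lfloor>(phi + 1) * of_int x - 1\<rfloor>"
proof
  fix x assume "x \<in> R 1 0" then obtain n where n: "n \<ge> 1" "x = A n + n" unfolding R10 by blast
  show "(h ^^ 2) x = \<lfloor>(phi + 1) * of_int x - 1\<rfloor>" unfolding pow2 n(2) using c1[OF n(1)] c2[OF n(1)] G1[OF n(1)] by simp
qed
lemma s2_22: "\<forall>x \<in> R 2 2. (h ^^ 2) x = x + 2"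
proof
  fix x assume "x \<in> R 2 2" then obtain n where n: "n \<ge> 1" "x = 2 * A n + n - 2" unfolding R22 by blast
  show "(h ^^ 2) x = x + 2" unfolding pow2 n(2) using c4[OF n(1)] c1[OF n(1)] by simp
qed
lemma s2_20: "\<forall>x \<in> R 2 0. (h ^^ 2) x = x - 2"
proof
  fix x assume "x \<in> R 2 0" then obtain n where n: "n \<ge> 1" "x = 2 * A n + n" unfolding R20 by blast
  show "(h ^^ 2) x = x - 2" unfolding pow2 n(2) using c2[OF n(1)] c3[OF n(1)] by simp
qed
lemma s2_31: "\<forall>x \<in> R 3 1. (h ^^ 2) x = \<lfloor>(2 - phi) * of_int x + 1\<rfloor>"
proof
  fix x assume "x \<in> R 3 1" then obtain n where n: "n \<ge> 1" "x = 3 * A n + 2 * n - 1" unfolding R31 by blast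
  show "(h ^^ 2) x = \<lfloor>(2 - phi) * of_int x + 1\<rfloor>" unfolding pow2 n(2) using c3[OF n(1)] c4[OF n(1)] G2[OF n(1)] by simp
qed

lemma s3_22: "\<forall>x \<in> R 2 2. (h ^^ 3) x = \<lfloor>phi * of_int x + 3\<rfloor>"
proof
  fix x assume "x \<in> R 2 2" then obtain n where n: "n \<ge> 1" "x = 2 * A n + n - 2" unfolding R22 by blast
  show "(h ^^ 3) x = \<lfloor>phi * of_int x + 3\<rfloor>" unfolding pow3 n(2) using c4[OF n(1)] c1[OF n(1)] c2[OF n(1)] H1[OF n(1)] by simp
qed
lemma s3_10: "\<forall>x \<in> R 1 0. (h ^^ 3) x = \<lfloor>phi * of_int x - 2\<rfloor>"
proof
  fix x assume "x \<in> R 1 0" then obtain n where n: "n \<ge> 1" "x = A n + n" unfolding R10 by blast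
  show "(h ^^ 3) x = \<lfloor>phi * of_int x - 2\<rfloor>" unfolding pow3 n(2) using c1[OF n(1)] c2[OF n(1)] c3[OF n(1)] H2[OF n(1)] by simp
qed
lemma s3_31: "\<forall>x \<in> R 3 1. (h ^^ 3) x = \<lfloor>(phi - 1) * of_int x + 1\<rfloor>"
proof
  fix x assume "x \<in> R 3 1" then obtain n where n: "n \<ge> 1" "x = 3 * A n + 2 * n - 1" unfolding R31 by blast
  show "(h ^^ 3) x = \<lfloor>(phi - 1) * of_int x + 1\<rfloor>" unfolding pow3 n(2) using c3[OF n(1)] c4[OF n(1)] c1[OF n(1)] H3[OF n(1)] by simp
qed
lemma s3_20: "\<forall>x \<in> R 2 0. (h ^^ 3) x = \<lfloor>(phi - 1) * of_int x + 1\<rfloor>"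
proof
  fix x assume "x \<in> R 2 0" then obtain n where n: "n \<ge> 1" "x = 2 * A n + n" unfolding R20 by blast
  show "(h ^^ 3) x = \<lfloor>(phi - 1) * of_int x + 1\<rfloor>" unfolding pow3 n(2) using c2[OF n(1)] c3[OF n(1)] c4[OF n(1)] H4[OF n(1)] by simp
qed

lemma Rperm_h: "Rperm h"
proof (rule Rperm4[of h 1 0 0 1 0 0 1 "-1" 2 1 "-1" "-1", OF bij_h])
  show "\<forall>x\<in>R 1 0. h x = \<lfloor>(of_int 1 * phi + of_int 0) * of_int x + of_int 0\<rfloor>"
    by (rule conv[where E="\<lambda>x. phi * of_int x"]) (simp_all add: hR10)
  show "\<forall>x\<in>R 2 0. h x = \<lfloor>(of_int 1 * phi + of_int 0) * of_int x + of_int 0\<rfloor>"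
    by (rule conv[where E="\<lambda>x. phi * of_int x"]) (simp_all add: hR20)
  show "\<forall>x\<in>R 2 2. h x = \<lfloor>(of_int 1 * phi + of_int (-1)) * of_int x + of_int 2\<rfloor>"
    by (rule conv[where E="\<lambda>x. (phi - 1) * of_int x + 2"]) (simp_all add: hR22)
  show "\<forall>x\<in>R 3 1. h x = \<lfloor>(of_int 1 * phi + of_int (-1)) * of_int x + of_int (-1)\<rfloor>"
    by (rule conv[where E="\<lambda>x. (phi - 1) * of_int x - 1"]) (simp_all add: hR31)
qed

lemma Rperm_h2: "Rperm (h ^^ 2)"
proof (rule Rperm4[of "h ^^ 2" 1 1 "-1" 0 1 "-2" 0 1 2 "-1" 2 1, OF bij_h2])
  show "\<forall>x\<in>R 1 0. (h ^^ 2) x = \<lfloor>(of_int 1 * phi + of_int 1) * of_int x + of_int (-1)\<rfloor>"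
    by (rule conv[where E="\<lambda>x. (phi + 1) * of_int x - 1"]) (use s2_10 in simp_all)
  show "\<forall>x\<in>R 2 0. (h ^^ 2) x = \<lfloor>(of_int 0 * phi + of_int 1) * of_int x + of_int (-2)\<rfloor>"
    by (rule conv[where E="\<lambda>x. of_int (x - 2)"]) (use s2_20 in simp_all)
  show "\<forall>x\<in>R 2 2. (h ^^ 2) x = \<lfloor>(of_int 0 * phi + of_int 1) * of_int x + of_int 2\<rfloor>"
    by (rule conv[where E="\<lambda>x. of_int (x + 2)"]) (use s2_22 in simp_all)
  show "\<forall>x\<in>R 3 1. (h ^^ 2) x = \<lfloor>(of_int (-1) * phi + of_int 2) * of_int x + of_int 1\<rfloor>"
    by (rule conv[where E="\<lambda>x. (2 - phi) * of_int x + 1"]) (use s2_31 in \<open>simp_all add: algebra_simps\<close>)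
qed

lemma Rperm_h3: "Rperm (h ^^ 3)"
proof (rule Rperm4[of "h ^^ 3" 1 0 "-2" 1 "-1" 1 1 0 3 1 "-1" 1, OF bij_h3])
  show "\<forall>x\<in>R 1 0. (h ^^ 3) x = \<lfloor>(of_int 1 * phi + of_int 0) * of_int x + of_int (-2)\<rfloor>"
    by (rule conv[where E="\<lambda>x. phi * of_int x - 2"]) (use s3_10 in simp_all)
  show "\<forall>x\<in>R 2 0. (h ^^ 3) x = \<lfloor>(of_int 1 * phi + of_int (-1)) * of_int x + of_int 1\<rfloor>"
    by (rule conv[where E="\<lambda>x. (phi - 1) * of_int x + 1"]) (use s3_20 in simp_all)
  show "\<forall>x\<in>R 2 2. (h ^^ 3) x = \<lfloor>(of_int 1 * phi + of_int 0) * of_int x + of_int 3\<rfloor>"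
    by (rule conv[where E="\<lambda>x. phi * of_int x + 3"]) (use s3_22 in simp_all)
  show "\<forall>x\<in>R 3 1. (h ^^ 3) x = \<lfloor>(of_int 1 * phi + of_int (-1)) * of_int x + of_int 1\<rfloor>"
    by (rule conv[where E="\<lambda>x. (phi - 1) * of_int x + 1"]) (use s3_31 in simp_all)
qed

lemma vals: "h 1 = 2" "h 2 = 3" "h 3 = 4" "h 4 = 1" "h 5 = 8" "h 6 = 5" "h 7 = 11" "h 8 = 12" "h 9 = 7" "h 10 = 16"
  using c4[of 1] c1[of 1] c2[of 1] c3[of 1] c1[of 2] c4[of 2] c1[of 3] c2[of 2] c4[of 3] c1[of 4]
  by (simp_all add: A1 A2 A3 A4)

lemma listv: "map h [1..10] = [2, 3, 4, 1, 8, 5, 11, 12, 7, 16]"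
  by (simp add: upto.simps vals)

theorem theorem4p3:
  shows "Rperm h
    \<and> (\<forall>n::int. n \<ge> 1 \<longrightarrow> (h ^^ 4) n = n)
    \<and> (\<forall>k\<in>{1, 2, 3::nat}. \<exists>n::int. n \<ge> 1 \<and> (h ^^ k) n \<noteq> n)
    \<and> map h [1..10] = [2, 3, 4, 1, 8, 5, 11, 12, 7, 16]
    \<and> Rperm (h ^^ 2)
    \<and> (\<forall>n \<in> R 1 0. (h ^^ 2) n = \<lfloor>(phi + 1) * of_int n - 1\<rfloor>)
    \<and> (\<forall>n \<in> R 2 2. (h ^^ 2) n = n + 2)
    \<and> (\<forall>n \<in> R 2 0. (h ^^ 2) n = n - 2)
    \<and> (\<forall>n \<in> R 3 1. (h ^^ 2) n = \<lfloor>(2 - phi) * of_int n + 1\<rfloor>)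
    \<and> Rperm (h ^^ 3)
    \<and> (\<forall>n::int. n \<ge> 1 \<longrightarrow> (h ^^ 3) n = inv_into {1..} h n)
    \<and> (\<forall>n \<in> R 2 2. (h ^^ 3) n = \<lfloor>phi * of_int n + 3\<rfloor>)
    \<and> (\<forall>n \<in> R 1 0. (h ^^ 3) n = \<lfloor>phi * of_int n - 2\<rfloor>)
    \<and> (\<forall>n \<in> R 3 1 \<union> R 2 0. (h ^^ 3) n = \<lfloor>(phi - 1) * of_int n + 1\<rfloor>)"
proof (intro conjI)
  show "Rperm h" by (rule Rperm_h)
  show "\<forall>n::int. n \<ge> 1 \<longrightarrow> (h ^^ 4) n = n" using h4 by (simp add: pow4)
  show "\<forall>k\<in>{1, 2, 3::nat}. \<exists>n::int. n \<ge> 1 \<and> (h ^^ k) n \<noteq> n"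
  proof
    fix k :: nat assume "k \<in> {1, 2, 3}"
    then have "(h ^^ k) 1 \<noteq> 1" using vals by (auto simp: pow2 pow3)
    then show "\<exists>n::int. n \<ge> 1 \<and> (h ^^ k) n \<noteq> n" by (intro exI[of _ 1]) simp
  qed
  show "map h [1..10] = [2, 3, 4, 1, 8, 5, 11, 12, 7, 16]" by (rule listv)
  show "Rperm (h ^^ 2)" by (rule Rperm_h2)
  show "\<forall>n \<in> R 1 0. (h ^^ 2) n = \<lfloor>(phi + 1) * of_int n - 1\<rfloor>" by (rule s2_10)
  show "\<forall>n \<in> R 2 2. (h ^^ 2) n = n + 2" by (rule s2_22)
  show "\<forall>n \<in> R 2 0. (h ^^ 2) n = n - 2" by (rule s2_20)
  show "\<forall>n \<in> R 3 1. (h ^^ 2) n = \<lfloor>(2 - phi) * of_int n + 1\<rfloor>" by (rule s2_31)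
  show "Rperm (h ^^ 3)" by (rule Rperm_h3)
  show "\<forall>n::int. n \<ge> 1 \<longrightarrow> (h ^^ 3) n = inv_into {1..} h n"
  proof (intro allI impI)
    fix n :: int assume n: "n \<ge> 1"
    have inj: "inj_on h {1..}" using bij_h by (rule bij_betw_imp_inj_on)
    have m: "(h ^^ 3) n \<in> {1..}" using h_pos n by (simp add: pow3)
    have "h ((h ^^ 3) n) = n" using h4 n by (simp add: pow3)
    then have "inv_into {1..} h n = inv_into {1..} h (h ((h ^^ 3) n))" by simp
    also have "\<dots> = (h ^^ 3) n" using inv_into_f_f[OF inj m] .
    finally show "(h ^^ 3) n = inv_into {1..} h n" by simp
  qed
  show "\<forall>n \<in> R 2 2. (h ^^ 3) n = \<lfloor>phi * of_int n + 3\<rfloor>" by (rule s3_22)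
  show "\<forall>n \<in> R 1 0. (h ^^ 3) n = \<lfloor>phi * of_int n - 2\<rfloor>" by (rule s3_10)
  show "\<forall>n \<in> R 3 1 \<union> R 2 0. (h ^^ 3) n = \<lfloor>(phi - 1) * of_int n + 1\<rfloor>" using s3_31 s3_20 by blast
qed

end
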